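(* Fix $T>0$ and $d\in\{1,2,3\}$. There are constants $C_d>0$ depending only on $d$ and $C_l^{(d)},C_u^{(d)}>0$ depending only on $d$ and $T$ such that for all $0<t\le T$: $$\int_{\mathbb R^d}|K^{\mathrm{SFO}}_{t;x}|^2dx=C_dt^{-d/4},\qquad C_l^{(d)}t^{-d/4}\le\int_{\mathbb R^d}|K^{\mathrm{LKS}}_{t;x}|^2dx\le C_u^{(d)}t^{-d/4},$$ and hence $$\int_0^t\int_{\mathbb R^d}|K^{\mathrm{SFO}}_{s;x}|^2dx\,ds=C_dt^{\frac{4-d}{4}},\qquad C_l^{(d)}t^{\frac{4-d}{4}}\le\int_0^t\int_{\mathbb R^d}|K^{\mathrm{LKS}}_{s;x}|^2dx\,ds\le C_u^{(d)}t^{\frac{4-d}{4}}.$$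
   Context: $K^{\mathrm{LKS}}_{t;x}=(2\pi)^{-d}\int_{\mathbb R^d}e^{-\frac t8(-2+|\xi|^2)^2}\cos(\xi\cdot x)d\xi$ and $K^{\mathrm{SFO}}_{t;x}=(2\pi)^{-d}\int_{\mathbb R^d}e^{-\frac t8|\xi|^4}\cos(\xi\cdot x)d\xi$, $t>0$. *)

theory Defs
  imports "HOL-Analysis.Analysis"
begin

definition K_LKS :: "real \<Rightarrow> real ^ 'n \<Rightarrow> real" where
  "K_LKS t x = (2 * pi) powr (- real CARD('n)) *
     (LINT \<xi>|lborel. exp (- (t / 8) * (- 2 + (norm \<xi>)^2)^2) * cos (\<xi> \<bullet> x))"

definition K_SFO :: "real \<Rightarrow> real ^ 'n \<Rightarrow> real" where
  "K_SFO t x = (2 * pi) powr (- real CARD('n)) *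
     (LINT \<xi>|lborel. exp (- (t / 8) * (norm \<xi>)^4) * cos (\<xi> \<bullet> x))"

end

theory Submission
  imports Defs
begin


lemma nn_integral_scale:
  fixes f :: "'a::euclidean_space \<Rightarrow> ennreal" and c :: real
  assumes [measurable]: "f \<in> borel_measurable borel" and c: "c > 0"
  shows "(\<integral>\<^sup>+x. f x \<partial>lborel) = ennreal (c^DIM('a)) * (\<integral>\<^sup>+x. f (c *\<^sub>R x) \<partial>lborel)"
  using c by (subst lborel_affine[of c 0]) (simp_all add: nn_integral_density nn_integral_distr nn_integral_cmult)

lemma integrable_scale:
  fixes f :: "'a::euclidean_space \<Rightarrow> real" and c :: real
  assumes f: "integrable lborel f" and c: "c > 0"
  shows "integrable lborel (\<lambda>x. f (c *\<^sub>R x))"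
  using f f[THEN borel_measurable_integrable] c unfolding integrable_iff_bounded
  by (subst (asm) nn_integral_scale[where c=c]) (auto simp: ennreal_mult_less_top)

lemma integrable_scale_iff:
  fixes f :: "'a::euclidean_space \<Rightarrow> real" and c :: real
  assumes c: "c > 0"
  shows "integrable lborel (\<lambda>x. f (c *\<^sub>R x)) \<longleftrightarrow> integrable lborel f"
  using integrable_scale[of f c] integrable_scale[of "\<lambda>x. f (c *\<^sub>R x)" "1/c"] c
  by auto

lemma integral_scale:
  fixes f :: "'a::euclidean_space \<Rightarrow> real" and c :: real
  assumes c: "c > 0"
  shows "(\<integral>x. f x \<partial>lborel) = c^DIM('a) * (\<integral>x. f (c *\<^sub>R x) \<partial>lborel)"
proof cases
  assume f[measurable]: "integrable lborel f" then show ?thesis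
    using c f f[THEN borel_measurable_integrable] integrable_scale[OF f c]
    by (subst lborel_affine[of c 0])
       (simp_all add: integral_density integral_distr)
next
  assume "\<not> integrable lborel f" with c show ?thesis
    by (simp add: integrable_scale_iff not_integrable_integral_eq)
qed



lemma l_pow:
  fixes t :: real assumes t: "t > 0"
  shows "(t powr (-1/4))^n = t powr (- real n / 4)"
    using t by (simp add: powr_realpow[symmetric] powr_powr)

lemma l_facts:
  fixes t :: real assumes t: "t > 0"
  shows "(t powr (-1/4))^2 * sqrt t = 1" "(t powr (-1/4))^4 * t = 1"
proof -
  have "(t powr (-1/4))^2 = t powr (-1/2)"
    using t by (simp add: powr_realpow[symmetric] powr_powr)
  then have "(t powr (-1/4))^2 * sqrt t = t powr (-1/2) * t powr (1/2)"
    using t by (simp add: powr_half_sqrt)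
  also have "\<dots> = 1" using t by (simp add: powr_add[symmetric])
  finally show "(t powr (-1/4))^2 * sqrt t = 1" .
  have "(t powr (-1/4))^4 = t powr (-1)"
    using t by (simp add: powr_realpow[symmetric] powr_powr)
  then show "(t powr (-1/4))^4 * t = 1" using t by (simp add: powr_minus)
qed

definition Pf :: "real \<Rightarrow> real ^ 'n \<Rightarrow> real" where
  "Pf s y = (LINT \<eta>|lborel. exp (- (((norm \<eta>)^2 - s)^2 / 8)) * cos (\<eta> \<bullet> y))"

lemma K_LKS_scale:
  fixes x :: "real ^ 'n" assumes t: "t > 0"
  shows "K_LKS t x = (2 * pi) powr (- real CARD('n)) * t powr (- real CARD('n) / 4)
          * Pf (2 * sqrt t) (t powr (-1/4) *\<^sub>R x)"
proof -
  define l where "l = t powr (-1/4)"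
  have l: "l > 0" "l^2 * sqrt t = 1" using t l_facts[OF t] by (auto simp: l_def)
  have lp: "l ^ CARD('n) = t powr (- real CARD('n) / 4)" using l_pow[OF t] unfolding l_def .
  have eq: "exp (- (t / 8) * (- 2 + (norm (l *\<^sub>R \<eta>))^2)^2) * cos ((l *\<^sub>R \<eta>) \<bullet> x)
      = exp (- (((norm \<eta>)^2 - 2 * sqrt t)^2 / 8)) * cos (\<eta> \<bullet> (l *\<^sub>R x))" for \<eta> :: "real ^ 'n"
  proof -
    have "t * (- 2 + (norm (l *\<^sub>R \<eta>))^2)^2 = ((norm \<eta>)^2 - 2 * sqrt t)^2"
    proof -
      have n: "(norm (l *\<^sub>R \<eta>))^2 = l^2 * (norm \<eta>)^2" using l by (simp add: power_mult_distrib)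
      have "t = (sqrt t)^2" using t by simp
      then have "t * (- 2 + (norm (l *\<^sub>R \<eta>))^2)^2 = (sqrt t)^2 * (- 2 + l^2 * (norm \<eta>)^2)^2"
        using n by simp
      also have "\<dots> = (sqrt t * (- 2 + l^2 * (norm \<eta>)^2))^2"
        by (simp only: power_mult_distrib)
      also have "sqrt t * (- 2 + l^2 * (norm \<eta>)^2) = sqrt t * (-2) + (l^2 * sqrt t) * (norm \<eta>)^2"
        by (simp add: algebra_simps)
      finally have "t * (- 2 + (norm (l *\<^sub>R \<eta>))^2)^2 = (sqrt t * (-2) + (l^2 * sqrt t) * (norm \<eta>)^2)^2" .
      also have "\<dots> = ((norm \<eta>)^2 - 2 * sqrt t)^2" using l(2) by (simp add: power2_eq_square algebra_simps)
      finally show ?thesis .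
    qed
    then show ?thesis by (simp add: inner_commute)
  qed
  have "K_LKS t x = (2 * pi) powr (- real CARD('n)) * (l ^ CARD('n) *
     (LINT \<eta>|lborel. exp (- (t / 8) * (- 2 + (norm (l *\<^sub>R \<eta>))^2)^2) * cos ((l *\<^sub>R \<eta>) \<bullet> x)))"
    unfolding K_LKS_def by (subst integral_scale[OF l(1)]) simp
  also have "\<dots> = (2 * pi) powr (- real CARD('n)) * t powr (- real CARD('n) / 4)
          * Pf (2 * sqrt t) (l *\<^sub>R x)"
    unfolding Pf_def eq using t by (simp add: lp)
  finally show ?thesis by (simp add: l_def)
qed

lemma K_SFO_scale:
  fixes x :: "real ^ 'n" assumes t: "t > 0"
  shows "K_SFO t x = (2 * pi) powr (- real CARD('n)) * t powr (- real CARD('n) / 4)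
          * Pf 0 (t powr (-1/4) *\<^sub>R x)"
proof -
  define l where "l = t powr (-1/4)"
  have l: "l > 0" "t * l^4 = 1" using t l_facts[OF t] by (auto simp: l_def mult.commute)
  have lp: "l ^ CARD('n) = t powr (- real CARD('n) / 4)" using l_pow[OF t] unfolding l_def .
  have eq: "exp (- (t / 8) * (norm (l *\<^sub>R \<eta>))^4) * cos ((l *\<^sub>R \<eta>) \<bullet> x)
      = exp (- (((norm \<eta>)^2 - 0)^2 / 8)) * cos (\<eta> \<bullet> (l *\<^sub>R x))" for \<eta> :: "real ^ 'n"
  proof -
    have "t * (norm (l *\<^sub>R \<eta>))^4 = ((norm \<eta>)^2 - 0)^2"
    proof -
      have "t * (norm (l *\<^sub>R \<eta>))^4 = (t * l^4) * (norm \<eta>)^4" using l by (simp add: power_mult_distrib)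
      also have "\<dots> = ((norm \<eta>)^2 - 0)^2" unfolding l(2) by (simp add: power2_eq_square power4_eq_xxxx)
      finally show ?thesis .
    qed
    then show ?thesis by (simp add: inner_commute)
  qed
  have "K_SFO t x = (2 * pi) powr (- real CARD('n)) * (l ^ CARD('n) *
     (LINT \<eta>|lborel. exp (- (t / 8) * (norm (l *\<^sub>R \<eta>))^4) * cos ((l *\<^sub>R \<eta>) \<bullet> x)))"
    unfolding K_SFO_def by (subst integral_scale[OF l(1)]) simp
  also have "\<dots> = (2 * pi) powr (- real CARD('n)) * t powr (- real CARD('n) / 4)
          * Pf 0 (l *\<^sub>R x)"
    unfolding Pf_def eq using t by (simp add: lp)
  finally show ?thesis by (simp add: l_def)
qed



lemma integral_translate:
  fixes f :: "'a::euclidean_space \<Rightarrow> real"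
  assumes [measurable]: "f \<in> borel_measurable borel"
  shows "(\<integral>x. f x \<partial>lborel) = (\<integral>x. f (a + x) \<partial>lborel)"
proof -
  have "(\<integral>x. f x \<partial>lborel) = (\<integral>x. f x \<partial>(distr lborel borel ((+) a)))"
    by (simp add: lborel_distr_plus)
  also have "\<dots> = (\<integral>x. f (a + x) \<partial>lborel)"
    by (subst integral_distr) auto
  finally show ?thesis .
qed

lemma integrable_translate:
  fixes f :: "'a::euclidean_space \<Rightarrow> real"
  assumes "integrable lborel f"
  shows "integrable lborel (\<lambda>x. f (a + x))"
proof -
  have [measurable]: "f \<in> borel_measurable borel" using assms by auto
  have "integrable (distr lborel borel ((+) a)) f" using assms by (simp add: lborel_distr_plus)
  then show ?thesis by (subst (asm) integrable_distr_eq) auto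
qed

lemma meas_test:
  "(\<lambda>y. Pf s (y::real^'n)) \<in> borel_measurable borel"
  unfolding Pf_def by measurable

lemma meas_test2:
  "(\<lambda>t. LINT x|lborel. (K_LKS t (x::real^'n))^2) \<in> borel_measurable borel"
  unfolding K_LKS_def by measurable



definition mm :: "'a::euclidean_space \<Rightarrow> real" where "mm y = 1 / (1 + norm y ^ 4)"

lemma mm_pos: "mm y > 0" unfolding mm_def by (simp add: add_pos_nonneg)

lemma mm_meas[measurable]: "mm \<in> borel_measurable borel"
  unfolding mm_def by measurable

lemma mm_le_term: "\<exists>k. mm y \<le> (1/16)^k \<and> norm y < 2^(k+1)"
proof (cases "norm y < 2")
  case True
  have "mm y \<le> 1" unfolding mm_def by (simp add: divide_le_eq add_pos_nonneg)
  then show ?thesis using True by (intro exI[of _ 0]) auto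
next
  case False
  define r where "r = norm y"
  have r: "r \<ge> 2" using False r_def by auto
  define k where "k = nat \<lfloor>log 2 r\<rfloor>"
  have lg: "log 2 r \<ge> 1" using r by simp
  have kk: "real k = of_int \<lfloor>log 2 r\<rfloor>" using lg unfolding k_def by simp
  have "(2::real)^k = 2 powr real k" by (simp add: powr_realpow)
  also have "\<dots> \<le> 2 powr log 2 r" using kk by (intro powr_mono) auto
  also have "\<dots> = r" using r by simp
  finally have lo: "(2::real)^k \<le> r" .
  have "r = 2 powr log 2 r" using r by simp
  also have "\<dots> < 2 powr real (k+1)" using kk by (intro powr_less_mono) (auto, linarith)
  also have "\<dots> = 2^(k+1)" by (rule powr_realpow) simp
  finally have hi: "r < 2^(k+1)" .
  have "(16::real)^k = (2^4)^k" by simp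
  also have "\<dots> = 2^(4*k)" by (simp only: power_mult)
  also have "\<dots> = 2^(k*4)" by (simp add: mult.commute)
  also have "\<dots> = ((2::real)^k)^4" by (simp only: power_mult)
  also have "\<dots> \<le> r^4" using lo by (intro power_mono) auto
  finally have "(16::real)^k \<le> r^4" .
  then have "mm y \<le> 1 / (16::real)^k" unfolding mm_def r_def[symmetric]
    by (intro divide_left_mono) (auto intro!: mult_pos_pos add_pos_nonneg)
  then show ?thesis using hi unfolding r_def by (intro exI[of _ k]) (auto simp: power_one_over)
qed

lemma mm_le_series:
  "ennreal (mm y) \<le> (\<Sum>k. ennreal ((1/16)^k) * indicator (ball 0 (2^(k+1))) y)"
proof -
  obtain k where k: "mm y \<le> (1/16)^k" "norm y < 2^(k+1)" using mm_le_term by blast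
  have "ennreal (mm y) \<le> ennreal ((1/16)^k) * indicator (ball 0 (2^(k+1))) y"
    using k by (simp add: indicator_def)
  also have "\<dots> \<le> (\<Sum>k. ennreal ((1/16)^k) * indicator (ball 0 (2^(k+1))) y)"
  proof -
    define F where "F = (\<lambda>k. ennreal ((1/16)^k) * indicator (ball (0::'a) (2^(k+1))) y)"
    have "(\<Sum>i\<in>{k}. F i) \<le> suminf F" by (rule sum_le_suminf) auto
    moreover have "(\<Sum>i\<in>{k}. F i) = F k" by simp
    ultimately show ?thesis unfolding F_def by simp
  qed
  finally show ?thesis .
qed

lemma emeasure_ball_scale:
  assumes "r \<ge> 0"
  shows "emeasure lborel (ball (0::'a::euclidean_space) r) = ennreal (r ^ DIM('a) * measure lborel (ball (0::'a) 1))"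
proof -
  have "emeasure lborel (ball (0::'a) r) = ennreal (measure lborel (ball (0::'a) r))"
    using emeasure_lborel_ball_finite[of "0::'a" r] by (subst emeasure_eq_ennreal_measure) auto
  then show ?thesis using content_ball_conv_unit_ball[OF assms, of "0::'a"] by simp
qed

lemma mm_integrable:
  assumes d: "DIM('a::euclidean_space) \<le> 3"
  shows "integrable lborel (mm :: 'a \<Rightarrow> real)"
proof (rule integrableI_nonneg)
  show "mm \<in> borel_measurable lborel" by measurable
  show "AE x in lborel. 0 \<le> mm (x::'a)" by (rule AE_I2) (simp add: less_imp_le mm_pos)
  define V where "V = measure lborel (ball (0::'a) 1)"
  have V: "V \<ge> 0" unfolding V_def by simp
  have "(\<integral>\<^sup>+x. ennreal (mm (x::'a)) \<partial>lborel)
      \<le> (\<integral>\<^sup>+x. (\<Sum>k. ennreal ((1/16)^k) * indicator (ball (0::'a) (2^(k+1))) x) \<partial>lborel)"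
    by (intro nn_integral_mono mm_le_series)
  also have "\<dots> = (\<Sum>k. (\<integral>\<^sup>+x. ennreal ((1/16)^k) * indicator (ball (0::'a) (2^(k+1))) x \<partial>lborel))"
  proof (intro nn_integral_suminf)
    fix k :: nat
    have [measurable]: "ball (0::'a) (2^(k+1)) \<in> sets borel" by simp
    show "(\<lambda>x. ennreal ((1/16)^k) * indicator (ball (0::'a) (2^(k+1))) x) \<in> borel_measurable lborel"
      by measurable
  qed
  also have "\<dots> = (\<Sum>k. ennreal ((1/16)^k) * emeasure lborel (ball (0::'a) (2^(k+1))))"
    by (simp add: nn_integral_cmult_indicator)
  also have "\<dots> \<le> (\<Sum>k. ennreal (8 * V * (1/2)^k))"
  proof (intro suminf_le summableI)
    fix k :: nat
    have "((2::real)^(k+1)) ^ DIM('a) \<le> ((2::real)^(k+1))^3"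
    proof (intro power_increasing)
      show "1 \<le> (2::real)^(k+1)" by (rule one_le_power) simp
    qed (use d in auto)
    also have "\<dots> = 8 * 8^k" by (induct k) (auto simp: power_mult_distrib)
    finally have a: "((2::real)^(k+1)) ^ DIM('a) \<le> 8 * 8^k" .
    have "(1/16)^k * (((2::real)^(k+1)) ^ DIM('a) * V) \<le> (1/16)^k * (8 * 8^k * V)"
      using a V by (intro mult_left_mono mult_right_mono) auto
    also have "\<dots> = 8 * V * (1/2)^k" by (simp add: power_divide field_simps power_mult_distrib[symmetric])
    finally have b: "(1/16)^k * (((2::real)^(k+1)) ^ DIM('a) * V) \<le> 8 * V * (1/2)^k" .
    show "ennreal ((1/16)^k) * emeasure lborel (ball (0::'a) (2^(k+1))) \<le> ennreal (8 * V * (1/2)^k)"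
      using b V by (simp add: emeasure_ball_scale V_def[symmetric] ennreal_mult[symmetric])
  qed
  also have "\<dots> = ennreal (\<Sum>k. 8 * V * (1/2)^k)"
    using V by (intro suminf_ennreal2 summable_mult summable_geometric) auto
  also have "\<dots> < \<infinity>" by simp
  finally show "(\<integral>\<^sup>+x. ennreal (mm (x::'a)) \<partial>lborel) < \<infinity>" .
qed



lemma core_exp:
  fixes w :: real assumes w: "w \<ge> 0"
  shows "(1+w)^5 * exp (-(w^2/16)) \<le> 320^5"
proof -
  have "(1+w)^5 \<le> (1+w)^10" using w by (intro power_increasing) auto
  also have "\<dots> = ((1+w)^2)^5" by (simp flip: power_mult)
  also have "\<dots> \<le> (320*(1+w^2/160))^5"
  proof (intro power_mono)
    show "(1+w)^2 \<le> 320*(1+w^2/160)"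
    proof -
      have "0 \<le> (w-1)^2" by simp
      moreover have "(w-1)^2 = w^2 - 2*w + 1" "(1+w)^2 = 1 + 2*w + w^2"
        by (simp_all add: power2_eq_square algebra_simps)
      moreover have "320*(1+w^2/160) = 320 + 2*w^2" by (simp add: algebra_simps)
      ultimately show ?thesis by linarith
    qed
  qed simp
  also have "\<dots> = 320^5 * (1+w^2/160)^5" by (simp only: power_mult_distrib)
  also have "\<dots> \<le> 320^5 * (1+w^2/160)^10"
    by (intro mult_left_mono power_increasing) auto
  also have "\<dots> \<le> 320^5 * (exp (w^2/160))^10"
    by (intro mult_left_mono power_mono) (auto simp: exp_ge_add_one_self)
  also have "(exp (w^2/160))^10 = exp (w^2/16)" by (simp flip: exp_of_nat_mult)
  finally have "(1+w)^5 \<le> 320^5 * exp (w^2/16)" .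
  then have "(1+w)^5 * exp (-(w^2/16)) \<le> 320^5 * exp (w^2/16) * exp (-(w^2/16))"
    by (intro mult_right_mono) auto
  also have "\<dots> = 320^5" by (simp flip: exp_add)
  finally show ?thesis .
qed

lemma Ebound:
  fixes w s S :: real assumes "0 \<le> s" "s \<le> S"
  shows "exp (-((w - s)^2/8)) \<le> exp (S^2/8) * exp (-(w^2/16))"
proof -
  have "0 \<le> (w - s - s)^2" by simp
  moreover have "s^2 \<le> S^2" using assms by (intro power_mono) auto
  moreover have "(w - s)^2 = ((w - s - s)^2 + w^2 - 2 * s^2)/2"
    by (simp add: power2_eq_square algebra_simps)
  ultimately have "-((w - s)^2/8) \<le> S^2/8 + -(w^2/16)"
    by (simp add: field_simps) (use zero_le_power2[of "w - s*2"] in linarith)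
  then show ?thesis by (simp flip: exp_add)
qed

lemma polyb:
  fixes w s S :: real assumes "0 \<le> w" "0 \<le> s" "s \<le> S"
  shows "(w-s)^2*w/4 + w + \<bar>w-s\<bar>/2 \<le> 2*(1+S)^2*(1+w)^3"
proof -
  have a: "\<bar>w-s\<bar> \<le> (1+S)*(1+w)"
  proof -
    have "S*w \<ge> 0" using assms by simp
    moreover have "\<bar>w-s\<bar> \<le> w + S" using assms by (auto simp: abs_if)
    moreover have "(1+S)*(1+w) = 1 + S + w + S*w" by (simp add: algebra_simps)
    ultimately show ?thesis by linarith
  qed
  have a2: "(w-s)^2 \<le> ((1+S)*(1+w))^2"
    using a by (metis abs_ge_zero power2_abs power_mono)
  have b: "1 \<le> (1+S)" "1 \<le> 1+w" using assms by auto
  have c: "(1+S) \<le> (1+S)^2" using b by (simp add: power2_eq_square)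
  have d: "(1+w) \<le> (1+w)^3" "(1+w)^2 \<le> (1+w)^3" using b
    by (auto intro!: power_increasing[of 1 3 "1+w", simplified] power_increasing[of 2 3 "1+w", simplified])
  have "(w-s)^2*w/4 \<le> ((1+S)*(1+w))^2*(1+w)/4"
    using a2 assms by (intro divide_right_mono mult_mono) auto
  also have "\<dots> = (1+S)^2*(1+w)^3/4" by (simp add: power_mult_distrib power3_eq_cube power2_eq_square)
  finally have e1: "(w-s)^2*w/4 \<le> (1+S)^2*(1+w)^3/4" .
  have e2: "w \<le> (1+S)^2*(1+w)^3"
  proof -
    have "w \<le> 1*(1+w)^3" using d by simp
    also have "\<dots> \<le> (1+S)^2*(1+w)^3" using b c by (intro mult_right_mono) auto
    finally show ?thesis .
  qed
  have e3: "\<bar>w-s\<bar>/2 \<le> (1+S)^2*(1+w)^3/2"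
  proof -
    have "(1+S)*(1+w) \<le> (1+S)^2*(1+w)^3" using c d b by (intro mult_mono) auto
    then show ?thesis using a by simp
  qed
  have "0 \<le> (1+S)^2*(1+w)^3" using b by simp
  then show ?thesis using e1 e2 e3 by linarith
qed

lemma r4_bound:
  fixes r :: real assumes "r \<ge> 0"
  shows "1 + (r+1)^4 \<le> 9*(1+r^2)^2"
proof -
  have "(r-1)^2*(7*r^2+10*r+7) \<ge> 0" using assms by (intro mult_nonneg_nonneg) auto
  moreover have "(r-1)^2*(7*r^2+10*r+7) = 7*r^4 - 4*r^3 - 6*r^2 - 4*r + 7"
    "1 + (r+1)^4 = 2 + 4*r + 6*r^2 + 4*r^3 + r^4" "9*(1+r^2)^2 = 9+18*r^2+9*r^4"
    by (simp_all add: power2_eq_square power3_eq_cube power4_eq_xxxx algebra_simps)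
  moreover have "r^4 \<ge> 0" "r^2 \<ge> 0" by simp_all
  ultimately show ?thesis by linarith
qed



definition fs :: "real \<Rightarrow> real ^ 'n \<Rightarrow> real" where
  "fs s \<eta> = exp (- (((norm \<eta>)^2 - s)^2 / 8))"

lemma fs_meas[measurable]: "fs s \<in> borel_measurable borel"
  unfolding fs_def by measurable

lemma fs_pos: "fs s \<eta> > 0" unfolding fs_def by simp

lemma fs_abs[simp]: "\<bar>fs s \<eta>\<bar> = fs s \<eta>" using fs_pos[of s \<eta>] by simp

lemma Pf_fs: "Pf s y = (LINT \<eta>|lborel. fs s \<eta> * cos (\<eta> \<bullet> y))"
  unfolding Pf_def fs_def ..

lemma le_mm: "X * (1 + norm \<eta> ^ 4) \<le> C \<Longrightarrow> X \<le> C * mm \<eta>"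
  unfolding mm_def by (simp add: field_simps add_pos_nonneg)

lemma pw5: "(w::real) \<ge> 0 \<Longrightarrow> k \<le> 5 \<Longrightarrow> (1+w)^k \<le> (1+w)^5"
  by (intro power_increasing) auto

lemma fs_mm:
  assumes "0 \<le> s" "s \<le> S"
  shows "fs s \<eta> \<le> (exp (S^2/8) * 320^5) * mm \<eta>"
proof (rule le_mm)
  define w where "w = (norm \<eta>)^2"
  have w: "w \<ge> 0" unfolding w_def by simp
  have n4: "norm \<eta> ^ 4 = w^2" unfolding w_def by (simp flip: power_mult)
  have "1 + w^2 \<le> (1+w)^2" using w by (simp add: power2_eq_square algebra_simps)
  also have "\<dots> \<le> (1+w)^5" using pw5[OF w] by simp
  finally have p: "1 + w^2 \<le> (1+w)^5" .
  have "fs s \<eta> * (1 + norm \<eta> ^ 4) \<le> (exp (S^2/8) * exp (-(w^2/16))) * (1 + w^2)"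
    unfolding n4 fs_def w_def[symmetric] using Ebound[OF assms, of w]
    by (intro mult_right_mono) (auto simp: add_nonneg_nonneg)
  also have "\<dots> \<le> (exp (S^2/8) * exp (-(w^2/16))) * (1+w)^5"
    using p by (intro mult_left_mono) auto
  also have "\<dots> = exp (S^2/8) * ((1+w)^5 * exp (-(w^2/16)))" by simp
  also have "\<dots> \<le> exp (S^2/8) * 320^5" using core_exp[OF w] by (intro mult_left_mono) auto
  finally show "fs s \<eta> * (1 + norm \<eta> ^ 4) \<le> exp (S^2/8) * 320^5" .
qed

lemma fs_norm_mm:
  assumes "0 \<le> s" "s \<le> S"
  shows "fs s \<eta> * norm \<eta> \<le> (exp (S^2/8) * 320^5) * mm \<eta>"
proof (rule le_mm)
  define w where "w = (norm \<eta>)^2"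
  have w: "w \<ge> 0" unfolding w_def by simp
  have n4: "norm \<eta> ^ 4 = w^2" unfolding w_def by (simp flip: power_mult)
  have nw: "norm \<eta> \<le> 1 + w" unfolding w_def
    using zero_le_power2[of "norm \<eta> - 1"] by (simp add: power2_eq_square algebra_simps) (use norm_ge_zero[of \<eta>] in linarith)
  have "1 + w^2 \<le> (1+w)^2" using w by (simp add: power2_eq_square algebra_simps)
  then have "norm \<eta> * (1 + w^2) \<le> (1+w) * (1+w)^2" using nw w by (intro mult_mono) auto
  also have "\<dots> = (1+w)^3" by (simp add: power3_eq_cube power2_eq_square)
  also have "\<dots> \<le> (1+w)^5" using pw5[OF w] by simp
  finally have p: "norm \<eta> * (1 + w^2) \<le> (1+w)^5" .
  have "fs s \<eta> * norm \<eta> * (1 + norm \<eta> ^ 4) = fs s \<eta> * (norm \<eta> * (1 + w^2))"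
    unfolding n4 by simp
  also have "\<dots> \<le> (exp (S^2/8) * exp (-(w^2/16))) * (1+w)^5"
    unfolding fs_def w_def[symmetric] using Ebound[OF assms, of w] p
    by (intro mult_mono) (auto simp: add_nonneg_nonneg)
  also have "\<dots> = exp (S^2/8) * ((1+w)^5 * exp (-(w^2/16)))" by simp
  also have "\<dots> \<le> exp (S^2/8) * 320^5" using core_exp[OF w] by (intro mult_left_mono) auto
  finally show "fs s \<eta> * norm \<eta> * (1 + norm \<eta> ^ 4) \<le> exp (S^2/8) * 320^5" .
qed

lemma integrable_by_mm:
  fixes g :: "real ^ 'n \<Rightarrow> real"
  assumes d: "CARD('n) \<le> 3" and [measurable]: "g \<in> borel_measurable borel"
    and b: "\<And>\<eta>. \<bar>g \<eta>\<bar> \<le> C * mm \<eta>"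
  shows "integrable lborel g"
proof (rule Bochner_Integration.integrable_bound[where f="\<lambda>\<eta>. C * mm \<eta>"])
  show "integrable lborel (\<lambda>\<eta>::real^'n. C * mm \<eta>)" using mm_integrable[where 'a="real^'n"] d by simp
  show "g \<in> borel_measurable lborel" by simp
  show "AE x in lborel. norm (g x) \<le> norm (C * mm x)"
    using b by (intro AE_I2) (smt (verit) real_norm_def)
qed

lemma fs_int:
  assumes d: "CARD('n) \<le> 3" and "0 \<le> s"
  shows "integrable lborel (\<lambda>\<eta>::real^'n. fs s \<eta> * cos (\<eta> \<bullet> y))"
    "integrable lborel (\<lambda>\<eta>::real^'n. fs s \<eta>)"
    "integrable lborel (\<lambda>\<eta>::real^'n. fs s \<eta> * norm \<eta>)"
proof -
  have b: "fs s \<eta> \<le> (exp (s^2/8) * 320^5) * mm \<eta>" for \<eta> :: "real^'n" using fs_mm[OF assms(2) order_refl] .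
  show "integrable lborel (\<lambda>\<eta>::real^'n. fs s \<eta> * cos (\<eta> \<bullet> y))"
  proof (rule integrable_by_mm[OF d])
    fix \<eta> :: "real^'n"
    have "\<bar>fs s \<eta> * cos (\<eta> \<bullet> y)\<bar> \<le> fs s \<eta> * 1"
      using fs_pos[of s \<eta>] by (simp add: abs_mult)
    then show "\<bar>fs s \<eta> * cos (\<eta> \<bullet> y)\<bar> \<le> (exp (s^2/8) * 320^5) * mm \<eta>" using b[of \<eta>] by simp
  qed measurable
  show "integrable lborel (\<lambda>\<eta>::real^'n. fs s \<eta>)"
    by (rule integrable_by_mm[OF d, where C="exp (s^2/8) * 320^5"]) (use b fs_pos in \<open>auto simp: less_imp_le\<close>)
  show "integrable lborel (\<lambda>\<eta>::real^'n. fs s \<eta> * norm \<eta>)"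
    by (rule integrable_by_mm[OF d, where C="exp (s^2/8) * 320^5"]) (use fs_norm_mm[OF assms(2) order_refl] fs_pos in \<open>auto simp: less_imp_le abs_mult\<close>)
qed



lemma second_diff:
  fixes \<phi> \<phi>' \<phi>'' :: "real \<Rightarrow> real"
  assumes d1: "\<And>\<sigma>. (\<phi> has_real_derivative \<phi>' \<sigma>) (at \<sigma>)"
    and d2: "\<And>\<sigma>. (\<phi>' has_real_derivative \<phi>'' \<sigma>) (at \<sigma>)"
    and b: "\<And>\<sigma>. 0 \<le> \<sigma> \<Longrightarrow> \<sigma> \<le> 2 \<Longrightarrow> \<bar>\<phi>'' \<sigma>\<bar> \<le> B"
  shows "\<bar>\<phi> 0 - 2 * \<phi> 1 + \<phi> 2\<bar> \<le> 2 * B"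
proof -
  obtain a where a: "0 < a" "a < 1" "\<phi> 1 - \<phi> 0 = (1 - 0) * \<phi>' a"
    using MVT2[of 0 1 \<phi> \<phi>'] d1 by auto
  obtain b where b': "1 < b" "b < 2" "\<phi> 2 - \<phi> 1 = (2 - 1) * \<phi>' b"
    using MVT2[of 1 2 \<phi> \<phi>'] d1 by auto
  obtain c where c: "a < c" "c < b" "\<phi>' b - \<phi>' a = (b - a) * \<phi>'' c"
    using MVT2[of a b \<phi>' \<phi>''] d2 a b' by auto
  have "\<phi> 0 - 2 * \<phi> 1 + \<phi> 2 = (b - a) * \<phi>'' c" using a b' c by simp
  moreover have "\<bar>\<phi>'' c\<bar> \<le> B" using b[of c] a b' c by auto
  moreover have "\<bar>b - a\<bar> \<le> 2" using a b' by auto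
  ultimately show ?thesis
  proof -
    assume e: "\<phi> 0 - 2 * \<phi> 1 + \<phi> 2 = (b - a) * \<phi>'' c" and h1: "\<bar>\<phi>'' c\<bar> \<le> B"
      and h2: "\<bar>b - a\<bar> \<le> 2"
    have "\<bar>(b - a) * \<phi>'' c\<bar> = \<bar>b - a\<bar> * \<bar>\<phi>'' c\<bar>" by (rule abs_mult)
    also have "\<dots> \<le> 2 * B" using h1 h2 by (intro mult_mono) auto
    finally show ?thesis using e by simp
  qed
qed

lemma phi_derivs:
  fixes A B C s :: real
  defines "v \<equiv> \<lambda>\<sigma>. A - 2*B*\<sigma> + C*\<sigma>^2 - s"
  defines "W' \<equiv> \<lambda>\<sigma>. - 2*B + 2*C*\<sigma>"
  defines "\<phi> \<equiv> \<lambda>\<sigma>. exp (-((v \<sigma>)^2/8))"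
  shows "(\<phi> has_real_derivative (-(v \<sigma> * W' \<sigma> / 4) * \<phi> \<sigma>)) (at \<sigma>)"
    "((\<lambda>\<sigma>. -(v \<sigma> * W' \<sigma> / 4) * \<phi> \<sigma>) has_real_derivative
        (((v \<sigma> * W' \<sigma>)^2/16 - ((W' \<sigma>)^2 + 2 * C * v \<sigma>)/4) * \<phi> \<sigma>)) (at \<sigma>)"
proof -
  show D: "(\<phi> has_real_derivative (-(v \<sigma> * W' \<sigma> / 4) * \<phi> \<sigma>)) (at \<sigma>)" for \<sigma>
    unfolding \<phi>_def v_def W'_def
    by (intro derivative_eq_intros) (rule refl | simp add: power2_eq_square field_simps)+
  show "((\<lambda>\<sigma>. -(v \<sigma> * W' \<sigma> / 4) * \<phi> \<sigma>) has_real_derivative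
        (((v \<sigma> * W' \<sigma>)^2/16 - ((W' \<sigma>)^2 + 2 * C * v \<sigma>)/4) * \<phi> \<sigma>)) (at \<sigma>)"
    unfolding v_def W'_def \<phi>_def
    by (intro derivative_eq_intros) (rule refl | simp add: power2_eq_square field_simps)+
qed

definition Kc :: "real \<Rightarrow> real" where
  "Kc S = exp (S^2/8) * 2 * (1+S)^2 * (9 * 320^5)"

lemma Kc_pos: "S \<ge> 0 \<Longrightarrow> Kc S > 0" unfolding Kc_def by (simp add: add_pos_nonneg)

lemma mm_trans_bound:
  fixes z \<eta> :: "real ^ 'n"
  assumes "norm \<eta> \<le> norm z + 1"
  shows "(1 + (norm z)^2)^3 * exp (- (((norm z)^2)^2/16)) \<le> (9 * 320^5) * mm \<eta>"
proof (rule le_mm)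
  define W where "W = (norm z)^2"
  have W: "W \<ge> 0" unfolding W_def by simp
  have "1 + norm \<eta> ^ 4 \<le> 1 + (norm z + 1)^4" using assms by (simp add: power_mono)
  also have "\<dots> \<le> 9 * (1 + W)^2" unfolding W_def by (rule r4_bound) simp
  finally have a: "1 + norm \<eta> ^ 4 \<le> 9 * (1 + W)^2" .
  have "(1 + W)^3 * exp (-(W^2/16)) * (1 + norm \<eta> ^ 4) \<le> (1 + W)^3 * exp (-(W^2/16)) * (9 * (1 + W)^2)"
    using a W by (intro mult_left_mono) auto
  also have "\<dots> = 9 * ((1+W)^5 * exp (-(W^2/16)))" by (simp add: power_add[symmetric])
  also have "\<dots> \<le> 9 * 320^5" using core_exp[OF W] by simp
  finally show "(1 + (norm z)^2)^3 * exp (- (((norm z)^2)^2/16)) * (1 + norm \<eta> ^ 4) \<le> 9 * 320^5"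
    unfolding W_def by simp
qed

lemma phi2_bound:
  fixes \<eta> h :: "real ^ 'n" and \<sigma> :: real
  assumes s: "0 \<le> s" "s \<le> S" and hs: "norm (\<sigma> *\<^sub>R h) \<le> 1"
  defines "A \<equiv> \<eta> \<bullet> \<eta>" and "B \<equiv> \<eta> \<bullet> h" and "C \<equiv> h \<bullet> h"
  defines "v \<equiv> A - 2*B*\<sigma> + C*\<sigma>^2 - s" and "W' \<equiv> - 2*B + 2*C*\<sigma>"
  shows "\<bar>((v * W')^2/16 - (W'^2 + 2 * C * v)/4) * exp (-(v^2/8))\<bar> \<le> C * Kc S * mm \<eta>"
proof -
  define z where "z = \<eta> - \<sigma> *\<^sub>R h"
  define W where "W = (norm z)^2"
  have W0: "W \<ge> 0" "C \<ge> 0" unfolding W_def C_def by simp_all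
  have "W = z \<bullet> z" unfolding W_def by (simp add: power2_norm_eq_inner)
  then have Wv: "v = W - s" unfolding v_def z_def A_def B_def C_def
    by (simp add: inner_diff_left inner_diff_right inner_commute power2_eq_square algebra_simps)
  have W'z: "W' = -2 * (z \<bullet> h)" unfolding W'_def z_def B_def C_def
    by (simp add: inner_diff_left algebra_simps)
  have CS: "W'^2 \<le> 4 * W * C"
  proof -
    have "\<bar>z \<bullet> h\<bar> \<le> norm z * norm h" by (rule Cauchy_Schwarz_ineq2)
    then have "(z \<bullet> h)^2 \<le> (norm z * norm h)^2"
      by (metis abs_ge_zero power2_abs power_mono)
    then show ?thesis unfolding W'z W_def C_def by (simp add: power_mult_distrib power2_norm_eq_inner)
  qed
  define E where "E = exp (-(v^2/8))"
  have E0: "E > 0" unfolding E_def by simp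
  have "\<bar>(v * W')^2/16 - (W'^2 + 2 * C * v)/4\<bar> \<le> v^2 * W'^2/16 + W'^2/4 + C * \<bar>v\<bar>/2"
  proof -
    have t1: "\<bar>(v * W')^2/16\<bar> = v^2 * W'^2/16" by (simp add: power_mult_distrib)
    have "\<bar>W'^2 + 2 * C * v\<bar> \<le> \<bar>W'^2\<bar> + \<bar>2 * C * v\<bar>" by (rule abs_triangle_ineq)
    also have "\<bar>2 * C * v\<bar> = 2 * C * \<bar>v\<bar>" using W0 by (simp add: abs_mult)
    finally have "\<bar>W'^2 + 2 * C * v\<bar> \<le> W'^2 + 2 * C * \<bar>v\<bar>" by simp
    then have t2: "\<bar>(W'^2 + 2 * C * v)/4\<bar> \<le> W'^2/4 + C * \<bar>v\<bar>/2" by simp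
    have "\<bar>(v * W')^2/16 - (W'^2 + 2 * C * v)/4\<bar> \<le> \<bar>(v * W')^2/16\<bar> + \<bar>(W'^2 + 2 * C * v)/4\<bar>"
      by (rule abs_triangle_ineq4)
    then show ?thesis using t1 t2 by linarith
  qed
  also have "\<dots> \<le> v^2 * (4 * W * C)/16 + (4 * W * C)/4 + C * \<bar>v\<bar>/2"
    using CS W0 by (intro add_mono divide_right_mono mult_left_mono) auto
  also have "\<dots> = C * (v^2 * W/4 + W + \<bar>v\<bar>/2)" by (simp add: algebra_simps)
  also have "\<dots> \<le> C * (2*(1+S)^2*(1+W)^3)"
    using polyb[OF W0(1) s] W0 unfolding Wv by (intro mult_left_mono) (auto simp: mult.commute)
  finally have p: "\<bar>(v * W')^2/16 - (W'^2 + 2 * C * v)/4\<bar> \<le> C * (2*(1+S)^2*(1+W)^3)" .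
  have e: "E \<le> exp (S^2/8) * exp (-(W^2/16))" unfolding E_def Wv by (rule Ebound[OF s])
  have nz: "norm \<eta> \<le> norm z + 1"
    using norm_triangle_ineq[of z "\<sigma> *\<^sub>R h"] hs unfolding z_def by simp
  have m: "(1 + W)^3 * exp (-(W^2/16)) \<le> (9 * 320^5) * mm \<eta>"
    using mm_trans_bound[OF nz] unfolding W_def by simp
  have "\<bar>((v * W')^2/16 - (W'^2 + 2 * C * v)/4) * E\<bar> = \<bar>(v * W')^2/16 - (W'^2 + 2 * C * v)/4\<bar> * E"
    using E0 by (simp add: abs_mult)
  also have "\<dots> \<le> (C * (2*(1+S)^2*(1+W)^3)) * (exp (S^2/8) * exp (-(W^2/16)))"
    using p e E0 W0 by (intro mult_mono) auto
  also have "\<dots> = C * exp (S^2/8) * 2 * (1+S)^2 * ((1+W)^3 * exp (-(W^2/16)))" by simp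
  also have "\<dots> \<le> C * exp (S^2/8) * 2 * (1+S)^2 * ((9 * 320^5) * mm \<eta>)"
    using m W0 by (intro mult_left_mono) auto
  also have "\<dots> = C * Kc S * mm \<eta>" unfolding Kc_def by simp
  finally show ?thesis unfolding E_def .
qed


lemma sd_bound:
  fixes \<eta> h :: "real ^ 'n"
  assumes s: "0 \<le> s" "s \<le> S" and hh: "norm h \<le> 1/2"
  shows "\<bar>fs s \<eta> - 2 * fs s (\<eta> - h) + fs s (\<eta> - 2 *\<^sub>R h)\<bar> \<le> 2 * ((h \<bullet> h) * Kc S * mm \<eta>)"
proof -
  define A where "A = \<eta> \<bullet> \<eta>"
  define B where "B = \<eta> \<bullet> h"
  define C where "C = h \<bullet> h"
  define v where "v = (\<lambda>\<sigma>::real. A - 2*B*\<sigma> + C*\<sigma>^2 - s)"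
  define W' where "W' = (\<lambda>\<sigma>::real. - 2*B + 2*C*\<sigma>)"
  define \<phi> where "\<phi> = (\<lambda>\<sigma>. exp (-((v \<sigma>)^2/8)))"
  have fs\<phi>: "fs s (\<eta> - \<sigma> *\<^sub>R h) = \<phi> \<sigma>" for \<sigma>
  proof -
    have "(norm (\<eta> - \<sigma> *\<^sub>R h))^2 = (\<eta> - \<sigma> *\<^sub>R h) \<bullet> (\<eta> - \<sigma> *\<^sub>R h)"
      by (simp add: power2_norm_eq_inner)
    also have "\<dots> = A - 2*B*\<sigma> + C*\<sigma>^2" unfolding A_def B_def C_def
      by (simp add: inner_diff_left inner_diff_right inner_commute power2_eq_square algebra_simps)
    finally show ?thesis unfolding fs_def \<phi>_def v_def by simp
  qed
  have "\<bar>\<phi> 0 - 2 * \<phi> 1 + \<phi> 2\<bar> \<le> 2 * (C * Kc S * mm \<eta>)"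
  proof (rule second_diff)
    show "(\<phi> has_real_derivative (-(v \<sigma> * W' \<sigma> / 4) * \<phi> \<sigma>)) (at \<sigma>)" for \<sigma>
      unfolding \<phi>_def v_def W'_def by (rule phi_derivs(1))
    show "((\<lambda>\<sigma>. -(v \<sigma> * W' \<sigma> / 4) * \<phi> \<sigma>) has_real_derivative
        (((v \<sigma> * W' \<sigma>)^2/16 - ((W' \<sigma>)^2 + 2 * C * v \<sigma>)/4) * \<phi> \<sigma>)) (at \<sigma>)" for \<sigma>
      unfolding \<phi>_def v_def W'_def by (rule phi_derivs(2))
    fix \<sigma> :: real assume "0 \<le> \<sigma>" "\<sigma> \<le> 2"
    then have "norm (\<sigma> *\<^sub>R h) \<le> 1" using hh by (simp add: mult_mono[of \<sigma> 2 "norm h" "1/2", simplified])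
    then show "\<bar>((v \<sigma> * W' \<sigma>)^2/16 - ((W' \<sigma>)^2 + 2 * C * v \<sigma>)/4) * \<phi> \<sigma>\<bar> \<le> C * Kc S * mm \<eta>"
      unfolding \<phi>_def v_def W'_def A_def B_def C_def by (rule phi2_bound[OF s])
  qed
  moreover have "\<phi> 0 = fs s \<eta>" "\<phi> 1 = fs s (\<eta> - h)" "\<phi> 2 = fs s (\<eta> - 2 *\<^sub>R h)"
    using fs\<phi>[of 0] fs\<phi>[of 1] fs\<phi>[of 2] by simp_all
  ultimately show ?thesis unfolding C_def by simp
qed



lemma trans_int:
  fixes G :: "real ^ 'n \<Rightarrow> real"
  assumes "integrable lborel (\<lambda>\<eta>. G (h + \<eta>))"
  shows "integrable lborel G"
  using integrable_translate[OF assms, of "-h"] by (simp add: add.assoc[symmetric])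

lemma Pf_decay:
  fixes y :: "real ^ 'n"
  assumes d: "CARD('n) \<le> 3" and s: "0 \<le> s" "s \<le> S" and y: "norm y \<ge> 2*pi"
  shows "\<bar>Pf s y\<bar> \<le> pi^2 * Kc S * (LINT x|lborel. mm (x::real^'n)) / (2 * (norm y)^2)"
proof -
  define Im where "Im = (LINT x|lborel. mm (x::real^'n))"
  have y0: "norm y > 0" using y pi_gt_zero by linarith
  define h where "h = (pi / (norm y)^2) *\<^sub>R y"
  have hy: "h \<bullet> y = pi" unfolding h_def using y0 by (simp add: power2_norm_eq_inner[symmetric])
  have hh: "h \<bullet> h = pi^2 / (norm y)^2" unfolding h_def using y0
    by (simp add: power2_norm_eq_inner[symmetric] power2_eq_square)
  have nh: "norm h = pi / norm y" unfolding h_def using y0 by (simp add: power2_eq_square)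
  have nh2: "norm h \<le> 1/2" unfolding nh using y y0 by (simp add: field_simps)
  define g where "g = (\<lambda>\<eta>::real^'n. fs s \<eta> * cos (\<eta> \<bullet> y))"
  define G1 where "G1 = (\<lambda>\<eta>::real^'n. fs s (\<eta> - h) * cos (\<eta> \<bullet> y))"
  define G2 where "G2 = (\<lambda>\<eta>::real^'n. fs s (\<eta> - 2 *\<^sub>R h) * cos (\<eta> \<bullet> y))"
  have gi: "integrable lborel g" unfolding g_def by (rule fs_int(1)[OF d s(1)])
  have [measurable]: "G1 \<in> borel_measurable borel" "G2 \<in> borel_measurable borel"
    unfolding G1_def G2_def by measurable
  have G1s: "G1 (h + \<eta>) = - g \<eta>" for \<eta>
    unfolding G1_def g_def by (simp add: inner_add_left hy add.commute[of pi] cos_periodic_pi)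
  have G2s: "G2 (2 *\<^sub>R h + \<eta>) = g \<eta>" for \<eta>
    unfolding G2_def g_def by (simp add: inner_add_left hy add.commute[of "2*pi"])
  have G1i: "integrable lborel G1"
    by (rule trans_int[of G1 h]) (simp add: G1s gi)
  have G2i: "integrable lborel G2"
    by (rule trans_int[of G2 "2 *\<^sub>R h"]) (simp add: G2s gi)
  have I1: "integral\<^sup>L lborel G1 = - Pf s y"
    by (subst integral_translate[of G1 h]) (simp_all add: G1s Pf_fs g_def)
  have I2: "integral\<^sup>L lborel G2 = Pf s y"
    by (subst integral_translate[of G2 "2 *\<^sub>R h"]) (simp_all add: G2s Pf_fs g_def)
  define D where "D = (\<lambda>\<eta>. g \<eta> - 2 * G1 \<eta> + G2 \<eta>)"
  have Di: "integrable lborel D" unfolding D_def using gi G1i G2i by auto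
  have ID: "integral\<^sup>L lborel D = 4 * Pf s y"
    unfolding D_def using gi G1i G2i I1 I2
    by (simp add: Pf_fs g_def[symmetric])
  have bi: "integrable lborel (\<lambda>\<eta>::real^'n. 2 * ((h \<bullet> h) * Kc S * mm \<eta>))"
  proof -
    have "integrable lborel (mm :: real^'n \<Rightarrow> real)" using mm_integrable[where 'a="real^'n"] d by simp
    then show ?thesis by (intro integrable_mult_right)
  qed
  have Db: "\<bar>D \<eta>\<bar> \<le> 2 * ((h \<bullet> h) * Kc S * mm \<eta>)" for \<eta>
  proof -
    have "D \<eta> = (fs s \<eta> - 2 * fs s (\<eta> - h) + fs s (\<eta> - 2 *\<^sub>R h)) * cos (\<eta> \<bullet> y)"
      unfolding D_def g_def G1_def G2_def by (simp add: algebra_simps)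
    then have "\<bar>D \<eta>\<bar> \<le> \<bar>fs s \<eta> - 2 * fs s (\<eta> - h) + fs s (\<eta> - 2 *\<^sub>R h)\<bar>"
      by (simp add: abs_mult mult_left_le)
    also have "\<dots> \<le> 2 * ((h \<bullet> h) * Kc S * mm \<eta>)" by (rule sd_bound[OF s nh2])
    finally show ?thesis .
  qed
  have "\<bar>4 * Pf s y\<bar> \<le> (LINT (\<eta>::real^'n)|lborel. 2 * ((h \<bullet> h) * Kc S * mm \<eta>))"
    unfolding ID[symmetric] by (rule integral_abs_bound_integral[OF Di bi Db])
  also have "\<dots> = 2 * (h \<bullet> h) * Kc S * Im" unfolding Im_def by simp
  finally have "\<bar>Pf s y\<bar> \<le> (h \<bullet> h) * Kc S * Im / 2" by simp
  then show ?thesis unfolding hh Im_def by (simp add: field_simps)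
qed



lemma cos_m1: "\<bar>cos a - 1\<bar> \<le> \<bar>a::real\<bar>"
proof -
  have "cos a = cos (2 * (a/2))" by simp
  also have "\<dots> = 1 - 2 * (sin (a/2))^2" by (rule cos_double_sin)
  finally have e: "\<bar>cos a - 1\<bar> = 2 * (sin (a/2))^2" by simp
  have "(sin (a/2))^2 = \<bar>sin (a/2)\<bar> * \<bar>sin (a/2)\<bar>" by (simp add: power2_eq_square)
  also have "\<dots> \<le> \<bar>sin (a/2)\<bar> * 1" by (intro mult_left_mono) auto
  also have "\<dots> \<le> \<bar>a/2\<bar>" using abs_sin_x_le_abs_x[of "a/2"] by simp
  finally show ?thesis using e by simp
qed

lemma Pf_meas[measurable]: "Pf s \<in> borel_measurable borel"
  unfolding Pf_def by measurable

lemma Pf_bounded: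
  fixes y :: "real ^ 'n"
  assumes d: "CARD('n) \<le> 3" and s: "0 \<le> s" "s \<le> S"
  shows "\<bar>Pf s y\<bar> \<le> exp (S^2/8) * 320^5 * (LINT x|lborel. mm (x::real^'n))"
proof -
  have mi: "integrable lborel (mm :: real^'n \<Rightarrow> real)" using mm_integrable[where 'a="real^'n"] d by simp
  have "\<bar>Pf s y\<bar> \<le> (LINT \<eta>|lborel. fs s (\<eta>::real^'n))"
    unfolding Pf_fs by (rule integral_abs_bound_integral[OF fs_int(1)[OF d s(1)] fs_int(2)[OF d s(1)]])
       (auto simp: abs_mult intro!: mult_left_le fs_pos[THEN less_imp_le])
  also have "\<dots> \<le> (LINT \<eta>|lborel. (exp (S^2/8) * 320^5) * mm (\<eta>::real^'n))"
    by (rule integral_mono[OF fs_int(2)[OF d s(1)]]) (use mi fs_mm[OF s] in auto)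
  also have "\<dots> = exp (S^2/8) * 320^5 * (LINT x|lborel. mm (x::real^'n))" by simp
  finally show ?thesis .
qed

lemma Pf_lip:
  fixes y :: "real ^ 'n"
  assumes d: "CARD('n) \<le> 3" and s: "0 \<le> s" "s \<le> S"
  shows "\<bar>Pf s y - Pf s (0::real^'n)\<bar> \<le> norm y * (exp (S^2/8) * 320^5 * (LINT x|lborel. mm (x::real^'n)))"
proof -
  have mi: "integrable lborel (mm :: real^'n \<Rightarrow> real)" using mm_integrable[where 'a="real^'n"] d by simp
  have "Pf s y - Pf s (0::real^'n) = (LINT \<eta>|lborel. fs s (\<eta>::real^'n) * cos (\<eta> \<bullet> y) - fs s \<eta> * cos (\<eta> \<bullet> 0))"
    unfolding Pf_fs using fs_int(1)[OF d s(1), of y] fs_int(1)[OF d s(1), of 0] by simp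
  also have "\<dots> = (LINT \<eta>|lborel. fs s (\<eta>::real^'n) * (cos (\<eta> \<bullet> y) - 1))"
    by (simp add: algebra_simps)
  finally have e: "Pf s y - Pf s (0::real^'n) = (LINT \<eta>|lborel. fs s (\<eta>::real^'n) * (cos (\<eta> \<bullet> y) - 1))" .
  have i1: "integrable lborel (\<lambda>\<eta>::real^'n. fs s \<eta> * (cos (\<eta> \<bullet> y) - 1))"
    using fs_int(1)[OF d s(1), of y] fs_int(2)[OF d s(1)] by (simp add: algebra_simps)
  have i2: "integrable lborel (\<lambda>\<eta>::real^'n. norm y * (fs s \<eta> * norm \<eta>))"
    using fs_int(3)[OF d s(1)] by simp
  have "\<bar>Pf s y - Pf s (0::real^'n)\<bar> \<le> (LINT \<eta>|lborel. norm y * (fs s (\<eta>::real^'n) * norm \<eta>))"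
    unfolding e
  proof (rule integral_abs_bound_integral[OF i1 i2])
    fix \<eta> :: "real^'n"
    have "\<bar>cos (\<eta> \<bullet> y) - 1\<bar> \<le> \<bar>\<eta> \<bullet> y\<bar>" by (rule cos_m1)
    also have "\<dots> \<le> norm \<eta> * norm y" by (rule Cauchy_Schwarz_ineq2)
    finally have "\<bar>cos (\<eta> \<bullet> y) - 1\<bar> \<le> norm \<eta> * norm y" .
    then have "fs s \<eta> * \<bar>cos (\<eta> \<bullet> y) - 1\<bar> \<le> fs s \<eta> * (norm \<eta> * norm y)"
      using fs_pos[of s \<eta>] by (intro mult_left_mono) auto
    moreover have "\<bar>fs s \<eta> * (cos (\<eta> \<bullet> y) - 1)\<bar> = fs s \<eta> * \<bar>cos (\<eta> \<bullet> y) - 1\<bar>"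
      by (simp add: abs_mult)
    moreover have "fs s \<eta> * (norm \<eta> * norm y) = norm y * (fs s \<eta> * norm \<eta>)" by (simp add: mult_ac)
    ultimately show "\<bar>fs s \<eta> * (cos (\<eta> \<bullet> y) - 1)\<bar> \<le> norm y * (fs s \<eta> * norm \<eta>)"
      by simp
  qed
  also have "\<dots> = norm y * (LINT \<eta>|lborel. fs s (\<eta>::real^'n) * norm \<eta>)" by simp
  also have "\<dots> \<le> norm y * (LINT \<eta>|lborel. (exp (S^2/8) * 320^5) * mm (\<eta>::real^'n))"
    by (intro mult_left_mono integral_mono[OF fs_int(3)[OF d s(1)]]) (use mi fs_norm_mm[OF s] in auto)
  also have "\<dots> = norm y * (exp (S^2/8) * 320^5 * (LINT x|lborel. mm (x::real^'n)))" by simp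
  finally show ?thesis .
qed

lemma Pf0_lower:
  fixes S :: real
  assumes d: "CARD('n) \<le> 3" and s: "0 \<le> s" "s \<le> S"
  shows "Pf s (0::real^'n) \<ge> exp (-((1+S)^2/8)) * measure lborel (ball (0::real^'n) 1)"
proof -
  have "Pf s (0::real^'n) = (LINT \<eta>|lborel. fs s (\<eta>::real^'n))" unfolding Pf_fs by simp
  moreover have "(LINT \<eta>|lborel. exp (-((1+S)^2/8)) * indicator (ball (0::real^'n) 1) \<eta>)
      \<le> (LINT \<eta>|lborel. fs s (\<eta>::real^'n))"
  proof (rule integral_mono)
    show "integrable lborel (\<lambda>\<eta>. exp (-((1+S)^2/8)) * indicator (ball (0::real^'n) 1) \<eta>)"
      using emeasure_lborel_ball_finite[of "0::real^'n" 1] by (intro integrable_mult_right) auto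
    show "integrable lborel (\<lambda>\<eta>. fs s (\<eta>::real^'n))" by (rule fs_int(2)[OF d s(1)])
    fix \<eta> :: "real^'n"
    show "exp (-((1+S)^2/8)) * indicator (ball (0::real^'n) 1) \<eta> \<le> fs s \<eta>"
    proof (cases "\<eta> \<in> ball 0 1")
      case True
      then have n: "(norm \<eta>)^2 \<le> 1" by (simp add: power_le_one)
      have z: "0 \<le> (norm \<eta>)^2" by simp
      have "\<bar>(norm \<eta>)^2 - s\<bar> \<le> 1 + S" unfolding abs_le_iff using n s z by (intro conjI; linarith)
      then have "((norm \<eta>)^2 - s)^2 \<le> (1+S)^2"
        by (metis abs_ge_zero power2_abs power_mono)
      then show ?thesis using True unfolding fs_def by simp
    next
      case False
      then show ?thesis using fs_pos[of s \<eta>] by simp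
    qed
  qed
  ultimately show ?thesis by simp
qed



lemma Q_bounds:
  assumes d: "CARD('n) \<le> 3" and S: "S \<ge> 0"
  shows "\<exists>ql qu. 0 < ql \<and> 0 < qu \<and> (\<forall>s. 0 \<le> s \<and> s \<le> S \<longrightarrow>
     integrable lborel (\<lambda>y::real^'n. (Pf s y)^2) \<and>
     ql \<le> (LINT y|lborel. (Pf s (y::real^'n))^2) \<and> (LINT y|lborel. (Pf s (y::real^'n))^2) \<le> qu)"
proof -
  define Im where "Im = (LINT x|lborel. mm (x::real^'n))"
  have mi: "integrable lborel (mm :: real^'n \<Rightarrow> real)" using mm_integrable[where 'a="real^'n"] d by simp
  have Im0: "Im \<ge> 0" unfolding Im_def by (rule Bochner_Integration.integral_nonneg) (simp add: less_imp_le mm_pos)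
  define A0 where "A0 = exp (S^2/8) * 320^5 * Im"
  define Bd where "Bd = pi^2 * Kc S * Im / 2"
  define Kq where "Kq = A0^2 * (1 + (2*pi)^4) + 2 * Bd^2"
  define Mb where "Mb = exp (S^2/8) * 320^5 * Im"
  define a0 where "a0 = exp (-((1+S)^2/8)) * measure lborel (ball (0::real^'n) 1)"
  define r where "r = a0 / (2 * Mb + 1)"
  have Mb0: "Mb \<ge> 0" unfolding Mb_def using Im0 by simp
  have a0: "a0 > 0" unfolding a0_def using content_ball_pos[of 1 "0::real^'n"] by simp
  have r0: "r > 0" unfolding r_def using a0 Mb0 by simp
  have rMb: "r * Mb \<le> a0 / 2" unfolding r_def using a0 Mb0 by (simp add: field_simps)
  define ql where "ql = (a0/2)^2 * measure lborel (ball (0::real^'n) r)"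
  have ql: "ql > 0" unfolding ql_def using a0 content_ball_pos[OF r0, of "0::real^'n"] by simp
  have pw: "(Pf s y)^2 \<le> Kq * mm y" if s: "0 \<le> s" "s \<le> S" for s and y :: "real^'n"
  proof (cases "norm y < 2*pi")
    case True
    have "\<bar>Pf s y\<bar> \<le> A0" unfolding A0_def Im_def by (rule Pf_bounded[OF d s])
    then have a: "(Pf s y)^2 \<le> A0^2" by (metis abs_ge_zero power2_abs power_mono)
    have "norm y ^ 4 \<le> (2*pi)^4" using True by (intro power_mono) auto
    then have "A0^2 * (1 + norm y ^ 4) \<le> A0^2 * (1 + (2*pi)^4)" by (intro mult_left_mono) auto
    then have "A0^2 \<le> (A0^2 * (1 + (2*pi)^4)) * mm y" by (rule le_mm)
    also have "\<dots> \<le> Kq * mm y" unfolding Kq_def using mm_pos[of y] by (intro mult_right_mono) auto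
    finally show ?thesis using a by simp
  next
    case False
    then have y: "norm y \<ge> 2*pi" by simp
    have y1: "norm y \<ge> 1" using y pi_gt3 by linarith
    have "\<bar>Pf s y\<bar> \<le> Bd / (norm y)^2"
      using Pf_decay[OF d s y] unfolding Bd_def Im_def by (simp add: field_simps)
    then have "(Pf s y)^2 \<le> (Bd / (norm y)^2)^2" by (metis abs_ge_zero power2_abs power_mono)
    also have "\<dots> = Bd^2 / norm y ^ 4" by (simp add: power_divide flip: power_mult)
    finally have a: "(Pf s y)^2 \<le> Bd^2 / norm y ^ 4" .
    have y4: "1 \<le> norm y ^ 4" using y1 by (simp add: one_le_power)
    have N: "norm y ^ 4 > 0" using y1 by (intro zero_less_power) linarith
    have "Bd^2 / norm y ^ 4 * (1 + norm y ^ 4) = Bd^2 / norm y ^ 4 + Bd^2 / norm y ^ 4 * norm y ^ 4"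
      by (simp add: distrib_left)
    also have "Bd^2 / norm y ^ 4 * norm y ^ 4 = Bd^2" using N by simp
    finally have "Bd^2 / norm y ^ 4 * (1 + norm y ^ 4) = Bd^2 / norm y ^ 4 + Bd^2" .
    also have "\<dots> \<le> Bd^2 + Bd^2"
    proof -
      have "Bd^2 / norm y ^ 4 \<le> Bd^2 / 1" using y4 by (intro divide_left_mono) auto
      then show ?thesis by simp
    qed
    finally have "Bd^2 / norm y ^ 4 \<le> (2 * Bd^2) * mm y" by (intro le_mm) simp
    also have "\<dots> \<le> Kq * mm y" unfolding Kq_def using mm_pos[of y] by (intro mult_right_mono) auto
    finally show ?thesis using a by simp
  qed
  have int: "integrable lborel (\<lambda>y::real^'n. (Pf s y)^2)" if s: "0 \<le> s" "s \<le> S" for s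
    by (rule integrable_by_mm[OF d, where C=Kq]) (use pw[OF s] in auto)
  have up: "(LINT y|lborel. (Pf s (y::real^'n))^2) \<le> Kq * Im + 1" if s: "0 \<le> s" "s \<le> S" for s
  proof -
    have "(LINT y|lborel. (Pf s (y::real^'n))^2) \<le> (LINT y|lborel. Kq * mm (y::real^'n))"
      by (rule integral_mono[OF int[OF s]]) (use mi pw[OF s] in auto)
    also have "\<dots> = Kq * Im" unfolding Im_def by simp
    finally show ?thesis by simp
  qed
  have lo: "ql \<le> (LINT y|lborel. (Pf s (y::real^'n))^2)" if s: "0 \<le> s" "s \<le> S" for s
  proof -
    have "(LINT y|lborel. (a0/2)^2 * indicator (ball (0::real^'n) r) y) \<le> (LINT y|lborel. (Pf s (y::real^'n))^2)"
    proof (rule integral_mono[OF _ int[OF s]])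
      show "integrable lborel (\<lambda>y. (a0/2)^2 * indicator (ball (0::real^'n) r) y)"
        using emeasure_lborel_ball_finite[of "0::real^'n" r] by (intro integrable_mult_right) auto
      fix y :: "real^'n"
      show "(a0/2)^2 * indicator (ball (0::real^'n) r) y \<le> (Pf s y)^2"
      proof (cases "y \<in> ball 0 r")
        case True
        then have ny: "norm y < r" by simp
        have "\<bar>Pf s y - Pf s (0::real^'n)\<bar> \<le> norm y * Mb" unfolding Mb_def Im_def by (rule Pf_lip[OF d s])
        moreover have "Pf s (0::real^'n) \<ge> a0" unfolding a0_def by (rule Pf0_lower[OF d s])
        moreover have "norm y * Mb \<le> r * Mb" using ny Mb0 by (intro mult_right_mono) auto
        ultimately have "Pf s y \<ge> a0/2" using rMb by linarith
        then have "(a0/2)^2 \<le> (Pf s y)^2" using a0 by (intro power_mono) auto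
        then show ?thesis using True by simp
      qed simp
    qed
    then show ?thesis unfolding ql_def using emeasure_lborel_ball_finite[of "0::real^'n" r] by simp
  qed
  have "Kq \<ge> 0" unfolding Kq_def by (intro add_nonneg_nonneg mult_nonneg_nonneg) auto
  then have "Kq * Im + 1 > 0" using Im0 by (simp add: add_pos_nonneg mult_nonneg_nonneg add_nonneg_pos)
  then show ?thesis using ql int up lo by blast
qed



lemma powr_set_int:
  fixes e t :: real assumes e: "e > -1" and t: "t > 0"
  shows "set_integrable lborel {0<..<t} (\<lambda>s. s powr e)"
    "(LBINT s=0..t. s powr e) = t powr (e+1)/(e+1)"
proof -
  have h: "((\<lambda>s. s powr e) has_integral (t powr (e+1)/(e+1))) {0<..<t}"
    using has_integral_powr_from_0[OF e, of t] t by (simp add: has_integral_Icc_iff_Ioo)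
  have "(\<lambda>s. s powr e) absolutely_integrable_on {0<..<t}"
    by (rule nonnegative_absolutely_integrable_1) (use h in \<open>auto simp: integrable_on_def\<close>)
  then have "integrable (completion lborel) (\<lambda>x. indicator {0<..<t} x *\<^sub>R x powr e)"
    unfolding set_integrable_def by simp
  then show si: "set_integrable lborel {0<..<t} (\<lambda>s. s powr e)"
    unfolding set_integrable_def by (subst (asm) integrable_completion) measurable
  have "(LINT s:{0<..<t}|lborel. s powr e) = integral {0<..<t} (\<lambda>s. s powr e)"
    by (rule set_borel_integral_eq_integral(2)[OF si])
  also have "\<dots> = t powr (e+1)/(e+1)" using h by (rule integral_unique)
  finally show "(LBINT s=0..t. s powr e) = t powr (e+1)/(e+1)"
    using t by (simp add: interval_integral_Ioo)
qed

lemma K_sq_scale: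
  fixes K :: "real \<Rightarrow> real ^ 'n \<Rightarrow> real" and t s c :: real
  assumes t: "t > 0"
    and K: "\<And>x. K t x = c * t powr (- real CARD('n) / 4) * Pf s (t powr (-1/4) *\<^sub>R x)"
  shows "(LINT x|lborel. (K t x)^2) = c^2 * t powr (- real CARD('n) / 4) * (LINT y|lborel. (Pf s (y::real^'n))^2)"
proof -
  define l where "l = t powr (-1/4)"
  define d where "d = real CARD('n)"
  have l: "l > 0" unfolding l_def using t by simp
  have lp: "l ^ CARD('n) = t powr (- d / 4)" using l_pow[OF t] unfolding l_def d_def .
  have "(LINT y|lborel. (Pf s (y::real^'n))^2) = l ^ CARD('n) * (LINT x|lborel. (Pf s (l *\<^sub>R (x::real^'n)))^2)"
    by (subst integral_scale[OF l]) simp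
  then have e: "(LINT x|lborel. (Pf s (l *\<^sub>R (x::real^'n)))^2) = t powr (d/4) * (LINT y|lborel. (Pf s (y::real^'n))^2)"
    unfolding lp using t by (simp add: powr_minus field_simps)
  have "(LINT x|lborel. (K t x)^2) = (LINT x|lborel. (c * t powr (- d / 4))^2 * (Pf s (l *\<^sub>R (x::real^'n)))^2)"
    unfolding K l_def d_def by (simp add: power_mult_distrib)
  also have "\<dots> = (c * t powr (- d / 4))^2 * (t powr (d/4) * (LINT y|lborel. (Pf s (y::real^'n))^2))"
    by (simp add: e)
  also have "(c * t powr (- d / 4))^2 * t powr (d/4) = c^2 * t powr (- d / 4)"
    using t by (simp add: power_mult_distrib power2_eq_square powr_add[symmetric])
  ultimately show ?thesis unfolding d_def by (simp add: mult.assoc)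
qed



theorem lemma3p1:
  assumes "CARD('n::finite) \<le> 3"
  shows "\<exists>C C' :: real. C > 0 \<and> C' > 0 \<and>
    (\<forall>T::real. T > 0 \<longrightarrow>
      (\<exists>Cl Cu Cl' Cu' :: real. Cl > 0 \<and> Cu > 0 \<and> Cl' > 0 \<and> Cu' > 0 \<and>
        (\<forall>t. 0 < t \<and> t \<le> T \<longrightarrow>
          (LINT x|lborel. (K_SFO t (x :: real ^ 'n))^2) = C * t powr (- real CARD('n) / 4) \<and>
          Cl * t powr (- real CARD('n) / 4) \<le> (LINT x|lborel. (K_LKS t (x :: real ^ 'n))^2) \<and>
          (LINT x|lborel. (K_LKS t (x :: real ^ 'n))^2) \<le> Cu * t powr (- real CARD('n) / 4) \<and>
          (LBINT s=0..t. (LINT x|lborel. (K_SFO s (x :: real ^ 'n))^2))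
             = C' * t powr ((4 - real CARD('n)) / 4) \<and>
          Cl' * t powr ((4 - real CARD('n)) / 4)
             \<le> (LBINT s=0..t. (LINT x|lborel. (K_LKS s (x :: real ^ 'n))^2)) \<and>
          (LBINT s=0..t. (LINT x|lborel. (K_LKS s (x :: real ^ 'n))^2))
             \<le> Cu' * t powr ((4 - real CARD('n)) / 4))))"
proof -
  note d = assms
  define e where "e = - real CARD('n) / 4"
  have e1: "e > -1" unfolding e_def using d by simp
  have e1': "(4 - real CARD('n)) / 4 = e + 1" unfolding e_def by (simp add: field_simps)
  define c where "c = (2 * pi) powr (- real CARD('n))"
  define c2 where "c2 = c^2"
  have c2: "c2 > 0" unfolding c2_def c_def by simp
  define Q where "Q = (\<lambda>s. LINT y|lborel. (Pf s (y::real^'n))^2)"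
  have sqL: "(LINT x|lborel. (K_LKS t (x::real^'n))^2) = c2 * t powr e * Q (2 * sqrt t)" if t: "t > 0" for t
    unfolding c2_def e_def Q_def
    by (rule K_sq_scale[OF t]) (simp add: K_LKS_scale[OF t] c_def)
  have sqS: "(LINT x|lborel. (K_SFO t (x::real^'n))^2) = c2 * t powr e * Q 0" if t: "t > 0" for t
    unfolding c2_def e_def Q_def
    by (rule K_sq_scale[OF t]) (simp add: K_SFO_scale[OF t] c_def)
  obtain ql0 qu0 where q0: "0 < ql0" "\<And>s. 0 \<le> s \<and> s \<le> 0 \<longrightarrow> ql0 \<le> Q s"
    using Q_bounds[OF d, of 0] unfolding Q_def by auto
  have Q0: "Q 0 > 0" using q0 by (meson less_le_trans order_refl)
  define C where "C = c2 * Q 0"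
  have C: "C > 0" unfolding C_def using c2 Q0 by simp
  define C' where "C' = C / (e+1)"
  have C': "C' > 0" unfolding C'_def using C e1 by simp
  have LS: "(LBINT s=0..t. (LINT x|lborel. (K_SFO s (x :: real ^ 'n))^2)) = C' * t powr (e+1)"
    if t: "t > 0" for t
  proof -
    have "(LBINT s=0..t. (LINT x|lborel. (K_SFO s (x :: real ^ 'n))^2))
        = (LINT s:{0<..<t}|lborel. (LINT x|lborel. (K_SFO s (x :: real ^ 'n))^2))"
      using t by (simp add: interval_integral_Ioo)
    also have "\<dots> = (LINT s:{0<..<t}|lborel. C * s powr e)"
      by (rule set_lebesgue_integral_cong) (auto simp: sqS C_def)
    also have "\<dots> = C * (LINT s:{0<..<t}|lborel. s powr e)" by simp
    also have "(LINT s:{0<..<t}|lborel. s powr e) = t powr (e+1)/(e+1)"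
      using powr_set_int(2)[OF e1 t] t by (simp add: interval_integral_Ioo)
    finally show ?thesis unfolding C'_def by simp
  qed
  show ?thesis
  proof (rule exI[of _ C], rule exI[of _ C'], intro conjI C C' allI impI)
    fix T :: real assume T: "T > 0"
    define S where "S = 2 * sqrt T"
    have S: "S \<ge> 0" unfolding S_def using T by simp
    obtain ql qu where q: "0 < ql" "0 < qu"
      "\<And>s. 0 \<le> s \<and> s \<le> S \<longrightarrow> ql \<le> Q s \<and> Q s \<le> qu"
      using Q_bounds[OF d S] unfolding Q_def by auto
    define Cl where "Cl = c2 * ql"
    define Cu where "Cu = c2 * qu"
    have Cl: "Cl > 0" "Cu > 0" unfolding Cl_def Cu_def using c2 q by auto
    have bnd: "Cl * t powr e \<le> (LINT x|lborel. (K_LKS t (x :: real ^ 'n))^2) \<and>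
               (LINT x|lborel. (K_LKS t (x :: real ^ 'n))^2) \<le> Cu * t powr e"
      if t: "0 < t" "t \<le> T" for t
    proof -
      have "0 \<le> 2 * sqrt t" "2 * sqrt t \<le> S" unfolding S_def using t by auto
      then have qq: "ql \<le> Q (2 * sqrt t)" "Q (2 * sqrt t) \<le> qu" using q(3) by auto
      have p: "c2 * t powr e > 0" using c2 t by simp
      show ?thesis unfolding sqL[OF t(1)] Cl_def Cu_def
        using mult_left_mono[OF qq(1), of "c2 * t powr e"] mult_left_mono[OF qq(2), of "c2 * t powr e"] p
        by (simp add: mult_ac)
    qed
    define h where "h = (\<lambda>s. LINT x|lborel. (K_LKS s (x :: real ^ 'n))^2)"
    have hm[measurable]: "h \<in> borel_measurable borel" unfolding h_def K_LKS_def by measurable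
    show "\<exists>Cl Cu Cl' Cu' :: real. Cl > 0 \<and> Cu > 0 \<and> Cl' > 0 \<and> Cu' > 0 \<and>
        (\<forall>t. 0 < t \<and> t \<le> T \<longrightarrow>
          (LINT x|lborel. (K_SFO t (x :: real ^ 'n))^2) = C * t powr (- real CARD('n) / 4) \<and>
          Cl * t powr (- real CARD('n) / 4) \<le> (LINT x|lborel. (K_LKS t (x :: real ^ 'n))^2) \<and>
          (LINT x|lborel. (K_LKS t (x :: real ^ 'n))^2) \<le> Cu * t powr (- real CARD('n) / 4) \<and>
          (LBINT s=0..t. (LINT x|lborel. (K_SFO s (x :: real ^ 'n))^2))
             = C' * t powr ((4 - real CARD('n)) / 4) \<and>
          Cl' * t powr ((4 - real CARD('n)) / 4)
             \<le> (LBINT s=0..t. (LINT x|lborel. (K_LKS s (x :: real ^ 'n))^2)) \<and>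
          (LBINT s=0..t. (LINT x|lborel. (K_LKS s (x :: real ^ 'n))^2))
             \<le> Cu' * t powr ((4 - real CARD('n)) / 4))"
    proof (rule exI[of _ Cl], rule exI[of _ Cu], rule exI[of _ "Cl/(e+1)"], rule exI[of _ "Cu/(e+1)"], intro conjI allI impI)
      show "Cl > 0" "Cu > 0" by (fact Cl)+
      show "Cl/(e+1) > 0" "Cu/(e+1) > 0" using Cl e1 by auto
      fix t assume tt: "0 < t \<and> t \<le> T"
      then have t: "0 < t" "t \<le> T" by auto
      show "(LINT x|lborel. (K_SFO t (x :: real ^ 'n))^2) = C * t powr (- real CARD('n) / 4)"
        using sqS[OF t(1)] unfolding C_def e_def by (simp add: mult_ac)
      show "Cl * t powr (- real CARD('n) / 4) \<le> (LINT x|lborel. (K_LKS t (x :: real ^ 'n))^2)"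
        using bnd[OF t] unfolding e_def by simp
      show "(LINT x|lborel. (K_LKS t (x :: real ^ 'n))^2) \<le> Cu * t powr (- real CARD('n) / 4)"
        using bnd[OF t] unfolding e_def by simp
      show "(LBINT s=0..t. (LINT x|lborel. (K_SFO s (x :: real ^ 'n))^2))
             = C' * t powr ((4 - real CARD('n)) / 4)"
        unfolding e1' by (rule LS[OF t(1)])
      have pi: "set_integrable lborel {0<..<t} (\<lambda>s. s powr e)" by (rule powr_set_int(1)[OF e1 t(1)])
      have PI: "(LINT s:{0<..<t}|lborel. s powr e) = t powr (e+1)/(e+1)"
        using powr_set_int(2)[OF e1 t(1)] t by (simp add: interval_integral_Ioo)
      have hi: "set_integrable lborel {0<..<t} h"
      proof (rule set_integrable_bound[OF set_integrable_mult_right[OF pi, of Cu]])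
        show "set_borel_measurable lborel {0<..<t} h" unfolding set_borel_measurable_def by measurable
        show "AE x in lborel. x \<in> {0<..<t} \<longrightarrow> norm (h x) \<le> norm (Cu * x powr e)"
        proof (intro AE_I2 impI)
          fix x :: real assume x: "x \<in> {0<..<t}"
          then have b: "Cl * x powr e \<le> h x" "h x \<le> Cu * x powr e" using bnd[of x] t unfolding h_def by auto
          have "0 \<le> Cl * x powr e" using Cl by simp
          then show "norm (h x) \<le> norm (Cu * x powr e)" using b by simp
        qed
      qed
      have eqL: "(LBINT s=0..t. (LINT x|lborel. (K_LKS s (x :: real ^ 'n))^2)) = (LINT s:{0<..<t}|lborel. h s)"
        using t unfolding h_def by (simp add: interval_integral_Ioo)
      have "(LINT s:{0<..<t}|lborel. Cl * s powr e) \<le> (LINT s:{0<..<t}|lborel. h s)"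
        by (rule set_integral_mono[OF set_integrable_mult_right[OF pi] hi]) (use bnd t in \<open>auto simp: h_def\<close>)
      moreover have "(LINT s:{0<..<t}|lborel. h s) \<le> (LINT s:{0<..<t}|lborel. Cu * s powr e)"
        by (rule set_integral_mono[OF hi set_integrable_mult_right[OF pi]]) (use bnd t in \<open>auto simp: h_def\<close>)
      moreover have "(LINT s:{0<..<t}|lborel. Cl * s powr e) = Cl/(e+1) * t powr (e+1)" using PI by simp
      moreover have "(LINT s:{0<..<t}|lborel. Cu * s powr e) = Cu/(e+1) * t powr (e+1)" using PI by simp
      ultimately show "Cl/(e+1) * t powr ((4 - real CARD('n)) / 4)
             \<le> (LBINT s=0..t. (LINT x|lborel. (K_LKS s (x :: real ^ 'n))^2))"
        "(LBINT s=0..t. (LINT x|lborel. (K_LKS s (x :: real ^ 'n))^2))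
             \<le> Cu/(e+1) * t powr ((4 - real CARD('n)) / 4)"
        unfolding eqL e1' by simp_all
    qed
  qed
qed


end
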